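(* Let $q\geq 7$ be an odd prime power, $m\geq 2$ and $n=\frac{q^m-1}{2}$. Then the negacyclic BCH code $\mathcal{C}_{(q,n,3,0)}$, whose generator polynomial is $\mathbb{M}_{\beta}(x)\mathbb{M}_{\beta^3}(x)$, has parameters $[n,n-2m,3]$ and is almost distance-optimal with respect to the sphere-packing bound.
   Context: Let $\ell$ be the order of $q$ modulo $2n$, $\alpha$ a primitive element of $\mathrm{GF}(q^\ell)$, $\beta=\alpha^{(q^\ell-1)/(2n)}$ (a primitive $2n$-th root of unity), and $\mathbb{M}_{\beta^j}(x)$ the minimal polynomial of $\beta^j$ over $\mathrm{GF}(q)$. $\mathcal{C}_{(q,n,3,0)}$ is the negacyclic code of length $n$ over $\mathrm{GF}(q)$, i.e. the ideal of $\mathrm{GF}(q)[x]/(x^n+1)$ generated by $\mathrm{lcm}(\mathbb{M}_{\beta}(x),\mathbb{M}_{\beta^3}(x))$. An $[n,k,d]$ code over $\mathrm{GF}(q)$ is almost distance-optimal with respect to the sphere-packing bound if the sphere-packing bound shows that every $[n,k]$ linear code over $\mathrm{GF}(q)$ has minimum distance at most $d+1$. *)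

theory Defs
  imports "HOL-Computational_Algebra.Polynomial_Factorial" "HOL-Computational_Algebra.Euclidean_Algorithm" "HOL-Number_Theory.Pocklington"
begin

definition field_embedding :: "('a::field \<Rightarrow> 'b::field) \<Rightarrow> bool" where
  "field_embedding \<phi> \<longleftrightarrow> inj \<phi> \<and> \<phi> 0 = 0 \<and> \<phi> 1 = 1 \<and>
     (\<forall>x y. \<phi> (x + y) = \<phi> x + \<phi> y) \<and> (\<forall>x y. \<phi> (x * y) = \<phi> x * \<phi> y)"

definition primitive_element :: "'b::{finite,field} \<Rightarrow> bool" where
  "primitive_element \<alpha> \<longleftrightarrow> {\<alpha> ^ k | k. True} = UNIV - {0}"

definition min_poly :: "('a::field \<Rightarrow> 'b::field) \<Rightarrow> 'b \<Rightarrow> 'a poly" where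
  "min_poly \<phi> b = (THE p. lead_coeff p = 1 \<and> poly (map_poly \<phi> p) b = 0 \<and>
      (\<forall>r. poly (map_poly \<phi> r) b = 0 \<longrightarrow> p dvd r))"

text \<open>The cyclic-type (negacyclic) code of length n generated by g: the ideal of
  'a[x]/(x^n+1) generated by g, represented by reduced polynomials of degree < n.\<close>
definition negacyclic_code :: "nat \<Rightarrow> 'a::field poly \<Rightarrow> 'a poly set" where
  "negacyclic_code n g = {(f * g) mod (Polynomial.monom 1 n + 1) | f. True}"

definition hamming_weight :: "'a::zero poly \<Rightarrow> nat" where
  "hamming_weight c = card {i. Polynomial.coeff c i \<noteq> 0}"

definition min_distance :: "'a::zero poly set \<Rightarrow> nat" where
  "min_distance C = Inf {hamming_weight c | c. c \<in> C \<and> c \<noteq> 0}"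

definition code_dim :: "'a::field poly set \<Rightarrow> nat" where
  "code_dim C = vector_space.dim (Polynomial.smult :: 'a \<Rightarrow> 'a poly \<Rightarrow> 'a poly) C"

definition sphere_packing_bound_holds :: "nat \<Rightarrow> nat \<Rightarrow> nat \<Rightarrow> nat \<Rightarrow> bool" where
  "sphere_packing_bound_holds q n k d \<longleftrightarrow>
     q ^ k * (\<Sum>i\<le>(d - 1) div 2. (n choose i) * (q - 1) ^ i) \<le> q ^ n"

definition almost_dist_opt_sphere_packing :: "nat \<Rightarrow> nat \<Rightarrow> nat \<Rightarrow> nat \<Rightarrow> bool" where
  "almost_dist_opt_sphere_packing q n k d \<longleftrightarrow>
     (\<forall>d'. sphere_packing_bound_holds q n k d' \<longrightarrow> d' \<le> d + 1)"

end

theory Submission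
  imports Defs
begin


definition rhom :: "('x::comm_ring_1 \<Rightarrow> 'y::comm_ring_1) \<Rightarrow> bool" where
  "rhom h \<longleftrightarrow> h 0 = 0 \<and> h 1 = 1 \<and> (\<forall>x y. h (x + y) = h x + h y) \<and> (\<forall>x y. h (x * y) = h x * h y)"

lemma homD:
  assumes "rhom h"
  shows "h 0 = 0" "h 1 = 1" "h (x + y) = h x + h y" "h (x * y) = h x * h y"
  using assms unfolding rhom_def by auto

lemma hom_uminus: assumes "rhom h" shows "h (- x) = - h x"
proof -
  have "h x + h (- x) = 0" using homD(3)[OF assms, where x=x and y="-x"] homD(1)[OF assms] by simp
  thus ?thesis by (metis neg_eq_iff_add_eq_0)
qed

lemma hom_diff: assumes "rhom h" shows "h (x - y) = h x - h y"
  using homD(3)[OF assms, where x=x and y="-y"] hom_uminus[OF assms, of y] by simp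

lemma hom_sum: assumes "rhom h" shows "h (sum f A) = (\<Sum>a\<in>A. h (f a))"
  by (induction A rule: infinite_finite_induct) (auto simp: homD[OF assms])

lemma hom_prod: assumes "rhom h" shows "h (prod f A) = (\<Prod>a\<in>A. h (f a))"
  by (induction A rule: infinite_finite_induct) (auto simp: homD[OF assms])

lemma hom_power: assumes "rhom h" shows "h (x ^ k) = h x ^ k"
  by (induction k) (auto simp: homD[OF assms])

lemma hom_comp: assumes "rhom h" "rhom g" shows "rhom (g \<circ> h)"
  using assms unfolding rhom_def by auto

lemma hom_pow_iter: assumes "rhom (\<lambda>y::'y::comm_ring_1. y ^ q)" shows "rhom (\<lambda>y::'y. y ^ (q ^ k))"
proof (induction k)
  case 0 then show ?case by (simp add: rhom_def)
next
  case (Suc k)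
  have "(\<lambda>y::'y. y ^ (q ^ Suc k)) = (\<lambda>y. y ^ q) \<circ> (\<lambda>y. y ^ (q ^ k))"
    by (auto simp: power_mult[symmetric] mult.commute)
  then show ?case using hom_comp[OF Suc assms] by simp
qed

lemma map_poly_hom_add: assumes "rhom h" shows "map_poly h (p + q) = map_poly h p + map_poly h q"
  by (intro poly_eqI) (simp add: coeff_map_poly homD[OF assms])

lemma map_poly_hom_uminus: assumes "rhom h" shows "map_poly h (- p) = - map_poly h p"
  by (intro poly_eqI) (simp add: coeff_map_poly homD[OF assms] hom_uminus[OF assms])

lemma map_poly_hom_smult: assumes "rhom h" shows "map_poly h (Polynomial.smult c p) = Polynomial.smult (h c) (map_poly h p)"
  by (rule map_poly_smult) (simp_all add: homD[OF assms])

lemma map_poly_hom_mult: assumes "rhom h" shows "map_poly h (p * q) = map_poly h p * map_poly h q"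
proof (induction p)
  case 0 then show ?case by simp
next
  case (pCons a p)
  have "map_poly h (pCons a p * q) = map_poly h (Polynomial.smult a q + pCons 0 (p * q))" by simp
  also have "\<dots> = Polynomial.smult (h a) (map_poly h q) + pCons 0 (map_poly h p * map_poly h q)"
    by (simp add: map_poly_hom_add[OF assms] map_poly_hom_smult[OF assms] map_poly_pCons homD[OF assms] pCons)
  also have "\<dots> = map_poly h (pCons a p) * map_poly h q"
    by (simp add: map_poly_pCons homD[OF assms])
  finally show ?case .
qed

lemma map_poly_hom_1: assumes "rhom h" shows "map_poly h 1 = 1"
  using homD[OF assms] by simp

lemma map_poly_hom_prod: assumes "rhom h" shows "map_poly h (prod f A) = (\<Prod>a\<in>A. map_poly h (f a))"
  by (induction A rule: infinite_finite_induct) (auto simp: map_poly_hom_1[OF assms] map_poly_hom_mult[OF assms])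

lemma map_poly_hom_monom: assumes "rhom h" shows "map_poly h (Polynomial.monom c k) = Polynomial.monom (h c) k"
  by (simp add: map_poly_monom homD[OF assms])

lemma map_poly_hom_lin: assumes "rhom h" shows "map_poly h [:c, 1:] = [:h c, 1:]"
  by (simp add: map_poly_pCons homD[OF assms])

lemma poly_map_poly_hom: assumes "rhom h" shows "poly (map_poly h p) (h x) = h (poly p x)"
proof (induction p)
  case 0 then show ?case by (simp add: homD[OF assms])
next
  case (pCons a p)
  then show ?case by (simp add: map_poly_pCons homD[OF assms])
qed

lemma map_poly_hom_dvd: assumes "rhom h" "p dvd q" shows "map_poly h p dvd map_poly h q"
  using assms(2) by (auto simp: map_poly_hom_mult[OF assms(1)])



lemma ff_power_card:
  fixes x :: "'a :: {finite, field}"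
  shows "x ^ card (UNIV :: 'a set) = x"
proof (cases "x = 0")
  case False
  have "x * (\<Prod>y\<in>UNIV-{0}. x * y) = x * x ^ (card (UNIV :: 'a set) - 1) * \<Prod>(UNIV-{0})"
    by (simp add: prod.distrib mult_ac)
  also have "x * x ^ (card (UNIV :: 'a set) - 1) = x ^ Suc (card (UNIV :: 'a set) - 1)"
    by (subst power_Suc) auto
  also have "Suc (card (UNIV :: 'a set) - 1) = card (UNIV :: 'a set)"
    using finite_UNIV_card_ge_0[where ?'a = 'a] by simp
  also have "(\<Prod>y\<in>UNIV-{0}. x * y) = (\<Prod>y\<in>UNIV-{0}. y)"
    by (rule prod.reindex_bij_witness[of _ "\<lambda>y. y / x" "\<lambda>y. x * y"]) (use False in auto)
  finally show ?thesis
    by simp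
qed (use finite_UNIV_card_ge_0[where ?'a = 'a] in auto)

lemma ff_power_card_pow:
  fixes x :: "'a :: {finite, field}"
  shows "x ^ (card (UNIV :: 'a set) ^ k) = x"
  by (induction k) (simp_all add: ff_power_card power_mult)

lemma ff_of_nat_card:
  "of_nat (card (UNIV :: 'a :: {finite, field} set)) = (0::'a)"
proof -
  have "(\<Sum>y\<in>(UNIV::'a set). y + 1) = (\<Sum>y\<in>UNIV. y)"
    by (rule sum.reindex_bij_witness[of _ "\<lambda>y. y - 1" "\<lambda>y. y + 1"]) auto
  then show ?thesis by (simp add: sum.distrib)
qed

lemma ff_CHAR_prime: "prime CHAR('a :: {finite, field})"
  by (rule prime_CHAR_semidom) (rule finite_imp_CHAR_pos, simp)

lemma ff_card_CHAR_pow: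
  assumes "card (UNIV :: 'a :: {finite, field} set) = p ^ k" "prime p" "k > 0"
  shows "card (UNIV :: 'a set) = CHAR('a) ^ k"
proof -
  have "CHAR('a) dvd p ^ k"
    by (metis ff_of_nat_card assms(1) of_nat_eq_0_iff_char_dvd)
  then have "CHAR('a) dvd p" using prime_dvd_power ff_CHAR_prime by blast
  then have "CHAR('a) = p" using primes_dvd_imp_eq ff_CHAR_prime assms(2) by blast
  then show ?thesis using assms by simp
qed

lemma field_embedding_hom: "field_embedding \<phi> \<Longrightarrow> rhom \<phi>"
  unfolding field_embedding_def rhom_def by auto

lemma hom_of_nat: "rhom h \<Longrightarrow> h (of_nat n) = of_nat n"
  by (induction n) (auto simp: homD)

lemma embedding_CHAR:
  fixes \<phi> :: "'a::field \<Rightarrow> 'b::field"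
  assumes "field_embedding \<phi>"
  shows "CHAR('b) = CHAR('a)"
proof -
  have h: "rhom \<phi>" using assms field_embedding_hom by blast
  have inj: "inj \<phi>" using assms unfolding field_embedding_def by auto
  have eq: "(of_nat x = (0::'b)) \<longleftrightarrow> (of_nat x = (0::'a))" for x
  proof -
    have "(of_nat x = (0::'b)) \<longleftrightarrow> \<phi> (of_nat x) = \<phi> 0"
      using hom_of_nat[OF h, of x] homD(1)[OF h] by simp
    also have "\<dots> \<longleftrightarrow> of_nat x = (0::'a)" using inj by (simp add: inj_eq)
    finally show ?thesis .
  qed
  show ?thesis
    by (rule CHAR_eqI) (auto simp: eq of_nat_eq_0_iff_char_dvd)
qed

lemma frob_hom:
  assumes "CHAR('b::{field}) ^ k = q" "prime CHAR('b)" "q > 0"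
  shows "rhom (\<lambda>y::'b. y ^ q)"
  unfolding rhom_def
proof (intro conjI allI)
  show "(0::'b) ^ q = 0" using assms(3) by simp
  show "(1::'b) ^ q = 1" by simp
  fix x y :: 'b
  show "(x + y) ^ q = x ^ q + y ^ q" using freshmans_dream'[OF assms(2) assms(1)[symmetric]] by simp
  show "(x * y) ^ q = x ^ q * y ^ q" by (simp add: power_mult_distrib)
qed

lemma range_embedding_fixed:
  fixes \<phi> :: "'a::{finite,field} \<Rightarrow> 'b::{finite,field}"
  assumes "field_embedding \<phi>" "q = card (UNIV :: 'a set)"
  shows "y ^ q = y \<longleftrightarrow> y \<in> range \<phi>"
proof
  have h: "rhom \<phi>" using assms field_embedding_hom by blast
  have inj: "inj \<phi>" using assms unfolding field_embedding_def by auto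
  have "card {0::'a, 1} \<le> card (UNIV::'a set)" by (rule card_mono) auto
  then have q2: "q \<ge> 2" using assms(2) by simp
  define P :: "'b poly" where "P = Polynomial.monom 1 q + [:0, -1:]"
  have degP: "degree P = q" unfolding P_def using q2
    by (subst degree_add_eq_left) (auto simp: degree_monom_eq)
  have P0: "P \<noteq> 0" using degP q2 by auto
  have roots: "{x. poly P x = 0} = {x. x ^ q = x}" unfolding P_def by (auto simp: poly_monom)
  have fixa: "\<phi> a ^ q = \<phi> a" for a
    using hom_power[OF h, of a q] ff_power_card[of a] assms(2) by simp
  have sub: "range \<phi> \<subseteq> {x. x ^ q = x}" using fixa by auto
  have cardR: "card (range \<phi>) = q" using inj assms(2) by (simp add: card_image)
  have "card {x::'b. x ^ q = x} \<le> q" using card_poly_roots_bound[OF P0] degP roots by simp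
  then have "range \<phi> = {x. x ^ q = x}"
    using card_subset_eq[OF _ sub] cardR card_mono[OF _ sub] by (intro card_subset_eq[OF _ sub]) auto
  then show "y ^ q = y \<Longrightarrow> y \<in> range \<phi>" by auto
next
  have h: "rhom \<phi>" using assms field_embedding_hom by blast
  assume "y \<in> range \<phi>"
  then obtain a where "y = \<phi> a" by auto
  then show "y ^ q = y" using hom_power[OF h, of a q] ff_power_card[of a] assms(2) by simp
qed



lemma monic_dvd_antisym:
  fixes p r :: "'a::field_gcd poly"
  assumes "lead_coeff p = 1" "lead_coeff r = 1" "p dvd r" "r dvd p"
  shows "p = r"
proof (rule associated_eqI[OF assms(3,4)])
  show "normalize p = p" using assms(1) by (simp add: normalize_poly_eq_map_poly map_poly_idI)
  show "normalize r = r" using assms(2) by (simp add: normalize_poly_eq_map_poly map_poly_idI)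
qed

lemma dvd_transfer:
  fixes \<phi> :: "'a::field \<Rightarrow> 'b::field"
  assumes h: "rhom \<phi>" and inj: "inj \<phi>" and M0: "M \<noteq> 0"
    and d: "map_poly \<phi> M dvd map_poly \<phi> r"
  shows "M dvd r"
proof (rule ccontr)
  assume nd: "\<not> M dvd r"
  define s where "s = r mod M"
  have s0: "s \<noteq> 0" using nd unfolding s_def by (simp add: dvd_eq_mod_eq_0)
  have degs: "degree s < degree M" using degree_mod_less'[OF M0 s0[unfolded s_def]] s_def by simp
  have nz: "x \<noteq> 0 \<Longrightarrow> \<phi> x \<noteq> 0" for x using inj homD(1)[OF h] by (metis injD)
  have "r = M * (r div M) + s" unfolding s_def by simp
  then have "map_poly \<phi> r = map_poly \<phi> M * map_poly \<phi> (r div M) + map_poly \<phi> s"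
    by (metis map_poly_hom_add[OF h] map_poly_hom_mult[OF h])
  then have "map_poly \<phi> M dvd map_poly \<phi> s" using d by (metis dvd_add_right_iff dvd_triv_left)
  moreover have "map_poly \<phi> s \<noteq> 0" using s0 by (simp add: map_poly_eq_0_iff nz homD(1)[OF h])
  ultimately have "degree (map_poly \<phi> M) \<le> degree (map_poly \<phi> s)" by (rule dvd_imp_degree_le)
  then show False using degs by (simp add: degree_map_poly nz)
qed

lemma prod_lin_dvd:
  fixes R :: "'b::field poly"
  assumes "finite A" "\<forall>a\<in>A. poly R a = 0"
  shows "(\<Prod>a\<in>A. [:-a, 1:]) dvd R"
  using assms
proof (induction A arbitrary: R rule: finite_induct)
  case empty then show ?case by simp
next
  case (insert a A)
  then obtain S where S: "R = (\<Prod>a\<in>A. [:-a, 1:]) * S" by (meson dvd_def insertCI)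
  have "poly (\<Prod>a\<in>A. [:-a, 1:]) a \<noteq> 0" using insert(1,2) by (auto simp: poly_prod)
  moreover have "poly R a = 0" using insert by auto
  ultimately have "poly S a = 0" using S by simp
  then obtain T where "S = [:-a, 1:] * T" using poly_eq_0_iff_dvd by (metis dvdE)
  then have "R = (\<Prod>a\<in>A. [:-a, 1:]) * ([:-a, 1:] * T)" using S by (simp only:)
  then have "R = ([:-a, 1:] * (\<Prod>a\<in>A. [:-a, 1:])) * T" by (simp only: mult_ac)
  moreover have "(\<Prod>a\<in>insert a A. [:-a,1:]) = [:-a,1:] * (\<Prod>a\<in>A. [:-a,1:])"
    by (rule prod.insert[OF insert(1,2)])
  ultimately show ?case by (metis dvd_triv_left)
qed

lemma frob_inj:
  assumes hF: "rhom (\<lambda>y::'b::field. y ^ q)" and "q > 0"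
  shows "inj (\<lambda>y::'b. y ^ q)"
proof (rule injI)
  fix x y :: 'b assume "x ^ q = y ^ q"
  then have "(x - y) ^ q = 0" using hom_diff[OF hF, of x y] by simp
  then show "x = y" by simp
qed

lemma orbit_power:
  fixes b :: "'b::field"
  shows "(b ^ (q ^ i)) ^ (q ^ e) = b ^ (q ^ (i + e))"
  by (simp add: power_mult[symmetric] power_add)

lemma orbit_min_poly:
  fixes \<phi> :: "'a::field_gcd \<Rightarrow> 'b::field"
  assumes emb: "field_embedding \<phi>" and hF: "rhom (\<lambda>y::'b. y ^ q)" and q0: "q > 0"
    and rng: "\<forall>y::'b. y ^ q = y \<longleftrightarrow> y \<in> range \<phi>"
    and k0: "k > 0" and bk: "b ^ (q ^ k) = b" and bd: "\<forall>d. 0 < d \<and> d < k \<longrightarrow> b ^ (q ^ d) \<noteq> b"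
  shows "lead_coeff (min_poly \<phi> b) = 1 \<and> degree (min_poly \<phi> b) = k
    \<and> poly (map_poly \<phi> (min_poly \<phi> b)) b = 0
    \<and> (\<forall>r. poly (map_poly \<phi> r) b = 0 \<longrightarrow> min_poly \<phi> b dvd r)
    \<and> map_poly \<phi> (min_poly \<phi> b) = (\<Prod>i<k. [:-(b ^ (q ^ i)), 1:])"
proof -
  have h: "rhom \<phi>" using emb field_embedding_hom by blast
  have inj: "inj \<phi>" using emb unfolding field_embedding_def by auto
  have nz: "x \<noteq> 0 \<Longrightarrow> \<phi> x \<noteq> 0" for x using inj homD(1)[OF h] by (metis injD)
  define F where "F = (\<lambda>y::'b. y ^ q)"
  have hF': "rhom F" using hF F_def by simp
  define B where "B = (\<lambda>i. b ^ (q ^ i)) ` {..<k}"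
  have injB: "inj_on (\<lambda>i. b ^ (q ^ i)) {..<k}"
  proof -
    have *: "b ^ (q ^ i) \<noteq> b ^ (q ^ j)" if "i < j" "j < k" for i j
    proof
      assume "b ^ (q ^ i) = b ^ (q ^ j)"
      then have "(b ^ (q ^ i)) ^ (q ^ (k - j)) = (b ^ (q ^ j)) ^ (q ^ (k - j))" by simp
      then have "b ^ (q ^ (i + (k - j))) = b ^ (q ^ k)" using that by (simp add: orbit_power)
      moreover have "0 < i + (k - j)" "i + (k - j) < k" using that by auto
      ultimately show False using bd bk by auto
    qed
    show ?thesis unfolding inj_on_def
      by (metis * lessThan_iff linorder_neqE_nat)
  qed
  define P where "P = (\<Prod>i<k. [:-(b ^ (q ^ i)), 1:])"
  have PB: "P = (\<Prod>a\<in>B. [:-a, 1:])" unfolding P_def B_def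
    by (subst prod.reindex[OF injB]) simp
  have finB: "finite B" unfolding B_def by simp
  have cardB: "card B = k" unfolding B_def using injB by (simp add: card_image)
  have FB: "F ` B = B"
  proof (rule card_subset_eq[OF finB])
    show "F ` B \<subseteq> B"
    proof
      fix y assume "y \<in> F ` B"
      then obtain i where i: "i < k" "y = (b ^ (q ^ i)) ^ q" unfolding B_def F_def by auto
      then have y: "y = b ^ (q ^ Suc i)" by (simp add: power_mult[symmetric] mult.commute)
      show "y \<in> B"
      proof (cases "Suc i < k")
        case True then show ?thesis using y unfolding B_def by (metis lessThan_iff image_eqI)
      next
        case False then have "Suc i = k" using i by simp
        then have "y = b ^ (q ^ 0)" using y bk by simp
        then show ?thesis unfolding B_def using k0 by (intro image_eqI[of _ _ 0]) auto
      qed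
    qed
    have "inj F" using frob_inj[OF hF q0] F_def by simp
    then show "card (F ` B) = card B" by (simp add: card_image inj_on_subset)
  qed
  have injF: "inj F" using frob_inj[OF hF q0] F_def by simp
  have PF: "map_poly F P = P"
  proof -
    have "map_poly F P = (\<Prod>a\<in>B. [:- F a, 1:])"
      unfolding PB by (simp add: map_poly_hom_prod[OF hF'] map_poly_hom_lin[OF hF'] hom_uminus[OF hF'])
    also have "\<dots> = (\<Prod>a\<in>F ` B. [:- a, 1:])"
      by (subst prod.reindex) (auto intro: inj_on_subset[OF injF])
    finally show ?thesis using FB PB by simp
  qed
  have coeffP: "Polynomial.coeff P n \<in> range \<phi>" for n
  proof -
    have "F (Polynomial.coeff P n) = Polynomial.coeff P n"
      using PF by (metis coeff_map_poly homD(1)[OF hF'])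
    then show ?thesis using rng F_def by simp
  qed
  define M where "M = map_poly (inv_into UNIV \<phi>) P"
  have inv0: "inv_into UNIV \<phi> 0 = 0" using inj homD(1)[OF h] by (metis inv_into_f_f UNIV_I)
  have MP: "map_poly \<phi> M = P"
    by (intro poly_eqI) (simp add: M_def coeff_map_poly inv0 homD(1)[OF h] f_inv_into_f[OF coeffP])
  have degP: "degree P = k" unfolding P_def by (subst degree_prod_sum_eq) auto
  have lcP: "lead_coeff P = 1" unfolding P_def by (simp add: lead_coeff_prod)
  have degM: "degree M = k" using MP degP by (metis degree_map_poly nz)
  have lcM: "lead_coeff M = 1"
  proof -
    have "\<phi> (lead_coeff M) = lead_coeff P"
      using MP degM degP by (metis coeff_map_poly homD(1)[OF h])
    then have "\<phi> (lead_coeff M) = \<phi> 1" using lcP homD(2)[OF h] by simp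
    then show ?thesis using inj by (simp add: inj_eq)
  qed
  have rootM: "poly (map_poly \<phi> M) b = 0"
    using MP k0 unfolding P_def by (auto simp: poly_prod intro!: bexI[of _ 0])
  have minM: "M dvd r" if "poly (map_poly \<phi> r) b = 0" for r
  proof -
    define R where "R = map_poly \<phi> r"
    have RF: "map_poly F R = R"
    proof (intro poly_eqI)
      fix n
      have "\<phi> c ^ q = \<phi> c" for c using rng by auto
      then show "Polynomial.coeff (map_poly F R) n = Polynomial.coeff R n"
        using q0 by (simp add: R_def coeff_map_poly homD(1)[OF h] F_def)
    qed
    have Rr: "poly R (b ^ (q ^ i)) = 0" for i
    proof (induction i)
      case 0 then show ?case using that R_def by simp
    next
      case (Suc i)
      have "poly R (b ^ (q ^ Suc i)) = poly (map_poly F R) (F (b ^ (q ^ i)))"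
        using RF by (simp add: F_def power_mult[symmetric] mult.commute)
      also have "\<dots> = F (poly R (b ^ (q ^ i)))" by (rule poly_map_poly_hom[OF hF'])
      also have "\<dots> = 0" using Suc homD(1)[OF hF'] by simp
      finally show ?case .
    qed
    have "P dvd R" unfolding PB using prod_lin_dvd[OF finB] Rr unfolding B_def by auto
    then show ?thesis using dvd_transfer[OF h inj] MP R_def lcM by (metis leading_coeff_0_iff zero_neq_one)
  qed
  have mp: "min_poly \<phi> b = M"
    unfolding min_poly_def
  proof (rule the_equality)
    show "lead_coeff M = 1 \<and> poly (map_poly \<phi> M) b = 0 \<and> (\<forall>r. poly (map_poly \<phi> r) b = 0 \<longrightarrow> M dvd r)"
      using lcM rootM minM by blast
    fix p assume p: "lead_coeff p = 1 \<and> poly (map_poly \<phi> p) b = 0 \<and> (\<forall>r. poly (map_poly \<phi> r) b = 0 \<longrightarrow> p dvd r)"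
    show "p = M" using p lcM rootM minM by (intro monic_dvd_antisym) auto
  qed
  show ?thesis using mp lcM degM rootM minM MP P_def by simp
qed



lemma prim_facts:
  fixes \<alpha> :: "'b::{finite,field}"
  assumes prim: "primitive_element \<alpha>" and cQ: "card (UNIV :: 'b set) = Q"
  shows "\<alpha> \<noteq> 0" "\<alpha> ^ (Q - 1) = 1" "\<alpha> ^ i = \<alpha> ^ j \<longleftrightarrow> i mod (Q - 1) = j mod (Q - 1)"
proof -
  have rng: "{\<alpha> ^ k | k. True} = UNIV - {0}" using prim unfolding primitive_element_def .
  have "\<alpha> ^ 1 \<in> UNIV - {0}" using rng by blast
  then show a0: "\<alpha> \<noteq> 0" by simp
  have Q1: "Q \<ge> 1" using cQ finite_UNIV_card_ge_0[where 'a='b] by simp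
  have "\<alpha> * \<alpha> ^ (Q - 1) = \<alpha> * 1" using ff_power_card[of \<alpha>] cQ Q1
    by (metis Suc_diff_le diff_Suc_1 mult.right_neutral power_Suc)
  then show aN: "\<alpha> ^ (Q - 1) = 1" using a0 by simp
  define N where "N = Q - 1"
  have red: "\<alpha> ^ i = \<alpha> ^ (i mod N)" for i
  proof -
    have e: "\<alpha> ^ (N * (i div N)) = 1" using aN N_def by (simp add: power_mult)
    have "\<alpha> ^ i = \<alpha> ^ (N * (i div N)) * \<alpha> ^ (i mod N)"
      by (simp only: power_add[symmetric] mult_div_mod_eq)
    then show ?thesis using e by simp
  qed
  have "card (UNIV - {0::'b}) = N" using cQ N_def by (simp add: card_Diff_singleton)
  have img: "(\<lambda>k. \<alpha> ^ k) ` {..<N} = UNIV - {0}"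
  proof
    show "(\<lambda>k. \<alpha> ^ k) ` {..<N} \<subseteq> UNIV - {0}" using a0 by auto
    show "UNIV - {0} \<subseteq> (\<lambda>k. \<alpha> ^ k) ` {..<N}"
    proof
      fix y assume "y \<in> UNIV - {0::'b}"
      then obtain k where k: "y = \<alpha> ^ k" using rng by blast
      have "N > 0" using \<open>y \<in> UNIV - {0}\<close> \<open>card (UNIV - {0::'b}) = N\<close>
        by (metis card_gt_0_iff finite empty_iff finite_subset subset_UNIV)
      then show "y \<in> (\<lambda>k. \<alpha> ^ k) ` {..<N}" using k red[of k] by auto
    qed
  qed
  have inj: "inj_on (\<lambda>k. \<alpha> ^ k) {..<N}"
    by (rule eq_card_imp_inj_on) (auto simp: img \<open>card (UNIV - {0::'b}) = N\<close>)
  show "\<alpha> ^ i = \<alpha> ^ j \<longleftrightarrow> i mod (Q - 1) = j mod (Q - 1)"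
  proof
    assume "\<alpha> ^ i = \<alpha> ^ j"
    then have "\<alpha> ^ (i mod N) = \<alpha> ^ (j mod N)" using red by metis
    moreover have "N > 0" using img a0 by (metis empty_iff image_empty lessThan_0 neq0_conv DiffI UNIV_I singletonD)
    ultimately show "i mod (Q - 1) = j mod (Q - 1)" using inj N_def by (auto dest: inj_onD)
  next
    assume "i mod (Q - 1) = j mod (Q - 1)"
    then show "\<alpha> ^ i = \<alpha> ^ j" using red N_def by metis
  qed
qed

lemma coprime_min:
  fixes \<phi> :: "'a::field_gcd \<Rightarrow> 'b::field"
  assumes h: "rhom \<phi>" and M1: "lead_coeff M1 = 1" "poly (map_poly \<phi> M1) b = 0"
    "\<forall>r. poly (map_poly \<phi> r) b = 0 \<longrightarrow> M1 dvd r"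
    and M3: "poly (map_poly \<phi> M3) b \<noteq> 0"
  shows "coprime M1 M3"
proof (rule coprimeI)
  fix c assume c1: "c dvd M1" and c3: "c dvd M3"
  obtain e where e: "M1 = c * e" using c1 by (auto elim: dvdE)
  show "is_unit c"
  proof (cases "poly (map_poly \<phi> c) b = 0")
    case True
    then have "M1 dvd c" using M1 by auto
    then have "M1 dvd M3" using c3 by (rule dvd_trans)
    then obtain t where "M3 = M1 * t" by (auto elim: dvdE)
    then have "poly (map_poly \<phi> M3) b = 0" using M1(2) by (simp add: map_poly_hom_mult[OF h])
    then show ?thesis using M3 by simp
  next
    case False
    have "poly (map_poly \<phi> c) b * poly (map_poly \<phi> e) b = 0"
      using M1(2) e by (simp add: map_poly_hom_mult[OF h])
    then have "poly (map_poly \<phi> e) b = 0" using False by simp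
    then have "M1 dvd e" using M1 by auto
    then obtain t where t: "e = M1 * t" by (auto elim: dvdE)
    have M10: "M1 \<noteq> 0" using M1(1) by auto
    have "M1 * 1 = M1 * (c * t)" using e t by (simp add: mult_ac)
    then have "c * t = 1" using M10 by (metis mult_left_cancel)
    then show ?thesis by (metis dvd_triv_left)
  qed
qed

lemma poly_map_as_sum:
  fixes \<phi> :: "'a::field \<Rightarrow> 'b::field"
  assumes h: "rhom \<phi>" and fin: "finite S" and S: "{i. Polynomial.coeff c i \<noteq> 0} \<subseteq> S"
  shows "poly (map_poly \<phi> c) x = (\<Sum>i\<in>S. \<phi> (Polynomial.coeff c i) * x ^ i)"
proof -
  have "poly (map_poly \<phi> c) x = (\<Sum>i\<le>degree (map_poly \<phi> c). Polynomial.coeff (map_poly \<phi> c) i * x ^ i)"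
    by (rule poly_altdef)
  also have "\<dots> = (\<Sum>i\<le>degree (map_poly \<phi> c). \<phi> (Polynomial.coeff c i) * x ^ i)"
    by (simp add: coeff_map_poly homD(1)[OF h])
  also have "\<dots> = (\<Sum>i\<in>S. \<phi> (Polynomial.coeff c i) * x ^ i)"
  proof (rule sum.mono_neutral_cong)
    show "finite {..degree (map_poly \<phi> c)}" by simp
    show "finite S" by fact
    show "\<phi> (Polynomial.coeff c i) * x ^ i = 0" if "i \<in> {..degree (map_poly \<phi> c)} - S" for i
    proof -
      have "Polynomial.coeff c i = 0" using that S by blast
      then show ?thesis using homD(1)[OF h] by simp
    qed
    show "\<phi> (Polynomial.coeff c i) * x ^ i = 0" if "i \<in> S - {..degree (map_poly \<phi> c)}" for i
    proof -
      have "Polynomial.coeff (map_poly \<phi> c) i = 0" using that by (simp add: coeff_eq_0)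
      then show ?thesis by (simp add: coeff_map_poly homD(1)[OF h])
    qed
  qed auto
  finally show ?thesis .
qed

lemma weight_ge3:
  fixes \<phi> :: "'a::field \<Rightarrow> 'b::field"
  assumes h: "rhom \<phi>" and inj: "inj \<phi>" and c0: "c \<noteq> 0" and dc: "degree c < n"
    and r1: "poly (map_poly \<phi> c) \<alpha> = 0" and r3: "poly (map_poly \<phi> c) (\<alpha> ^ 3) = 0"
    and a0: "\<alpha> \<noteq> 0" and sep: "\<forall>i j. i < n \<longrightarrow> j < n \<longrightarrow> \<alpha> ^ (2 * i) = \<alpha> ^ (2 * j) \<longrightarrow> i = j"
  shows "hamming_weight c \<ge> 3"
proof (rule ccontr)
  define S where "S = {i. Polynomial.coeff c i \<noteq> 0}"
  have nz: "x \<noteq> 0 \<Longrightarrow> \<phi> x \<noteq> 0" for x using inj homD(1)[OF h] by (metis injD)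
  have Ssub: "S \<subseteq> {..degree c}" unfolding S_def using le_degree by auto
  have finS: "finite S" using Ssub finite_subset by blast
  have Sne: "S \<noteq> {}" using c0 unfolding S_def by (auto simp: poly_eq_iff)
  assume "\<not> 3 \<le> hamming_weight c"
  then have "card S = 1 \<or> card S = 2" using Sne finS unfolding hamming_weight_def S_def[symmetric]
    by (metis card_0_eq less_Suc_eq numeral_3_eq_3 One_nat_def numeral_2_eq_2 not_less_eq_eq le_less_Suc_eq less_antisym le0 not_le)
  then show False
  proof
    assume "card S = 1"
    then obtain i where Si: "S = {i}" by (metis One_nat_def card_1_singleton_iff)
    have "poly (map_poly \<phi> c) \<alpha> = \<phi> (Polynomial.coeff c i) * \<alpha> ^ i"
      using poly_map_as_sum[OF h finS, of c \<alpha>] Si S_def by simp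
    moreover have "Polynomial.coeff c i \<noteq> 0" using Si S_def by auto
    ultimately show False using r1 nz a0 by simp
  next
    assume "card S = 2"
    then obtain i j where Sij: "S = {i, j}" "i \<noteq> j" by (metis card_2_iff)
    define A where "A = \<phi> (Polynomial.coeff c i)"
    define B where "B = \<phi> (Polynomial.coeff c j)"
    have A0: "A \<noteq> 0" using Sij S_def A_def nz by auto
    have ij: "i < n" "j < n" using Sij Ssub dc by auto
    have e1: "A * \<alpha> ^ i + B * \<alpha> ^ j = 0"
      using poly_map_as_sum[OF h finS, of c \<alpha>] Sij S_def r1 A_def B_def by simp
    have e3: "A * \<alpha> ^ i * \<alpha> ^ (2 * i) + B * \<alpha> ^ j * \<alpha> ^ (2 * j) = 0"
    proof -
      have "A * (\<alpha> ^ 3) ^ i + B * (\<alpha> ^ 3) ^ j = 0"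
        using poly_map_as_sum[OF h finS, of c "\<alpha> ^ 3"] Sij S_def r3 A_def B_def by simp
      moreover have "(\<alpha> ^ 3) ^ k = \<alpha> ^ k * \<alpha> ^ (2 * k)" for k
        by (simp add: power_mult[symmetric] power_add[symmetric])
      ultimately show ?thesis by (simp add: mult.assoc)
    qed
    have "A * \<alpha> ^ i * (\<alpha> ^ (2 * i) - \<alpha> ^ (2 * j))
        = (A * \<alpha> ^ i * \<alpha> ^ (2 * i) + B * \<alpha> ^ j * \<alpha> ^ (2 * j)) - (A * \<alpha> ^ i + B * \<alpha> ^ j) * \<alpha> ^ (2 * j)"
      by (simp add: algebra_simps)
    also have "\<dots> = 0" using e1 e3 by simp
    finally have "\<alpha> ^ (2 * i) = \<alpha> ^ (2 * j)" using A0 a0 by simp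
    then show False using sep ij Sij(2) by blast
  qed
qed

lemma nonsquare_exists:
  fixes U :: "'a::{finite,field} set"
  assumes "card U \<le> 2" "card (UNIV :: 'a set) \<ge> 7"
  shows "\<exists>x::'a. x \<noteq> 0 \<and> x ^ 2 \<notin> U"
proof (rule ccontr)
  assume "\<not> ?thesis"
  then have all: "x \<noteq> 0 \<Longrightarrow> x ^ 2 \<in> U" for x :: 'a by blast
  define P where "P = (\<Prod>u\<in>U. [:-u, 0, 1:])"
  have P0: "P \<noteq> 0" unfolding P_def by (auto simp: prod_zero_iff)
  have "degree P = (\<Sum>u\<in>U. degree [:-u, 0, 1:])" unfolding P_def
    by (rule degree_prod_sum_eq) auto
  also have "\<dots> = 2 * card U" by simp
  finally have dP: "degree P \<le> 4" using assms(1) by simp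
  have "UNIV - {0} \<subseteq> {x. poly P x = 0}"
  proof
    fix x :: 'a assume "x \<in> UNIV - {0}"
    then have "x ^ 2 \<in> U" using all by auto
    then show "x \<in> {x. poly P x = 0}" unfolding P_def
      by (auto simp: poly_prod algebra_simps power2_eq_square intro!: bexI[of _ "x ^ 2"])
  qed
  then have "card (UNIV - {0::'a}) \<le> card {x. poly P x = 0}" by (intro card_mono) auto
  also have "\<dots> \<le> 4" using card_poly_roots_bound[OF P0] dP by simp
  finally show False using assms(2) by (simp add: card_Diff_singleton)
qed



lemma code_char:
  fixes g w X :: "'a::field poly"
  assumes g0: "g \<noteq> 0" and w0: "w \<noteq> 0" and X: "X = g * w"
  shows "c \<in> {(f * g) mod X | f. True} \<longleftrightarrow> (\<exists>h. c = h * g \<and> (h = 0 \<or> degree h < degree w))"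
proof
  assume "c \<in> {(f * g) mod X | f. True}"
  then obtain f where f: "c = (f * g) mod X" by auto
  have Xw: "X = w * g" unfolding X by (rule mult.commute)
  have "c = (f * g) mod (w * g)" by (simp only: f Xw)
  also have "\<dots> = (f mod w) * g" by (rule mod_mult_mult2)
  finally have "c = (f mod w) * g" .
  moreover have "f mod w = 0 \<or> degree (f mod w) < degree w" by (rule degree_mod_less[OF w0])
  ultimately show "\<exists>h. c = h * g \<and> (h = 0 \<or> degree h < degree w)" by (intro exI[of _ "f mod w"]) simp
next
  assume "\<exists>h. c = h * g \<and> (h = 0 \<or> degree h < degree w)"
  then obtain h where h: "c = h * g" "h = 0 \<or> degree h < degree w" by blast
  have "(h * g) mod X = h * g"
  proof (cases "h = 0")
    case False
    then have "degree (h * g) < degree X" using h(2) g0 w0 X by (simp add: degree_mult_eq)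
    then show ?thesis by (rule mod_poly_less)
  qed simp
  then have "c = (h * g) mod X" using h(1) by simp
  then show "c \<in> {(f * g) mod X | f. True}" by blast
qed

lemma poly_vs: "vector_space (Polynomial.smult :: 'a::field \<Rightarrow> 'a poly \<Rightarrow> 'a poly)"
  by unfold_locales (simp_all add: smult_add_right smult_add_left)

lemma code_dim_k:
  fixes g w X :: "'a::field poly"
  assumes g0: "g \<noteq> 0" and w0: "w \<noteq> 0" and X: "X = g * w"
  shows "code_dim {(f * g) mod X | f. True} = degree w"
proof -
  interpret vs: vector_space "Polynomial.smult :: 'a \<Rightarrow> 'a poly \<Rightarrow> 'a poly" by (rule poly_vs)
  define k where "k = degree w"
  define C where "C = {(f * g) mod X | f. True}"
  define bf where "bf = (\<lambda>i. Polynomial.monom (1::'a) i * g)"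
  define Bs where "Bs = bf ` {..<k}"
  have Cc: "c \<in> C \<longleftrightarrow> (\<exists>h. c = h * g \<and> (h = 0 \<or> degree h < k))" for c
    unfolding C_def k_def by (rule code_char[OF g0 w0 X])
  have injb: "inj_on bf {..<k}"
  proof (rule inj_onI)
    fix i j assume "i \<in> {..<k}" "j \<in> {..<k}" "bf i = bf j"
    then have "degree (bf i) = degree (bf j)" by simp
    then show "i = j" using g0 unfolding bf_def by (simp add: degree_mult_eq degree_monom_eq)
  qed
  have cardB: "card Bs = k" unfolding Bs_def using injb by (simp add: card_image)
  have BsC: "Bs \<subseteq> C"
  proof
    fix v assume "v \<in> Bs"
    then obtain i where i: "i < k" "v = bf i" unfolding Bs_def by auto
    show "v \<in> C" unfolding Cc using i unfolding bf_def
      by (intro exI[of _ "Polynomial.monom 1 i"]) (simp add: degree_monom_eq)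
  qed
  have CB: "C \<subseteq> vs.span Bs"
  proof
    fix c assume "c \<in> C"
    then obtain h where h: "c = h * g" "h = 0 \<or> degree h < k" using Cc by blast
    show "c \<in> vs.span Bs"
    proof (cases "h = 0")
      case True then show ?thesis using h vs.span_zero by simp
    next
      case False
      then have k0: "k > 0" "degree h \<le> k - 1" using h by auto
      have "c = (\<Sum>i\<le>k - 1. Polynomial.monom (Polynomial.coeff h i) i) * g"
        using poly_as_sum_of_monoms'[OF k0(2)] h(1) by simp
      also have "\<dots> = (\<Sum>i\<le>k - 1. Polynomial.smult (Polynomial.coeff h i) (bf i))"
        unfolding bf_def by (simp add: sum_distrib_right smult_monom_mult)
      finally have ceq: "c = (\<Sum>i\<le>k - 1. Polynomial.smult (Polynomial.coeff h i) (bf i))" .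
      have "bf i \<in> Bs" if "i \<le> k - 1" for i using that k0 unfolding Bs_def by auto
      then show ?thesis unfolding ceq
        by (intro vs.span_sum vs.span_scale vs.span_base) auto
    qed
  qed
  have indep: "vs.independent Bs"
  proof (rule vs.independent_if_scalars_zero)
    show "finite Bs" unfolding Bs_def by simp
    fix u v assume su: "(\<Sum>x\<in>Bs. Polynomial.smult (u x) x) = 0" and v: "v \<in> Bs"
    then obtain i0 where i0: "i0 < k" "v = bf i0" unfolding Bs_def by auto
    have "(\<Sum>x\<in>Bs. Polynomial.smult (u x) x) = (\<Sum>i<k. Polynomial.smult (u (bf i)) (bf i))"
      unfolding Bs_def by (rule sum.reindex[OF injb, unfolded comp_def])
    also have "\<dots> = (\<Sum>i<k. Polynomial.monom (u (bf i)) i) * g"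
      unfolding bf_def by (simp add: sum_distrib_right smult_monom_mult)
    finally have "(\<Sum>i<k. Polynomial.monom (u (bf i)) i) * g = 0" using su by simp
    then have "(\<Sum>i<k. Polynomial.monom (u (bf i)) i) = 0" using g0 by simp
    then have "Polynomial.coeff (\<Sum>i<k. Polynomial.monom (u (bf i)) i) i0 = 0" by simp
    then show "u v = 0" using i0 by (simp add: coeff_sum)
  qed
  have "vs.dim C = k" by (rule vs.dim_unique[OF BsC CB indep cardB])
  then show ?thesis unfolding code_dim_def C_def k_def .
qed



lemma qd_bounds:
  fixes q d m :: nat
  assumes "q \<ge> 7" "0 < d" "d < m"
  shows "3 * q ^ d + 1 < q ^ m" "q ^ d \<ge> 7"
proof -
  have "q ^ 1 \<le> q ^ d" using assms by (intro power_increasing) auto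
  then show d7: "q ^ d \<ge> 7" using assms by simp
  have "q ^ 1 \<le> q ^ (m - d)" using assms by (intro power_increasing) auto
  then have "q * q ^ d \<le> q ^ (m - d) * q ^ d" by simp
  also have "\<dots> = q ^ m" using assms by (simp add: power_add[symmetric])
  finally have "q * q ^ d \<le> q ^ m" .
  moreover have "7 * q ^ d \<le> q * q ^ d" using assms by simp
  ultimately show "3 * q ^ d + 1 < q ^ m" using d7 by linarith
qed

lemma sq_ineq:
  fixes n :: nat
  assumes "n \<ge> 24"
  shows "(2 * n + 1) ^ 2 < 18 * (n * (n - 1))"
proof -
  obtain r where r: "n = r + 24" using assms by (metis add.commute le_iff_add)
  have "r * r \<ge> 0" by simp
  then show ?thesis unfolding r by (simp add: power2_eq_square algebra_simps)
qed

lemma sphere: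
  fixes q m n :: nat
  assumes q7: "q \<ge> 7" and m2: "m \<ge> 2" and n: "2 * n + 1 = q ^ m" and nm: "2 * m \<le> n"
  shows "almost_dist_opt_sphere_packing q n (n - 2 * m) 3"
  unfolding almost_dist_opt_sphere_packing_def sphere_packing_bound_holds_def
proof (intro allI impI)
  fix d
  assume H: "q ^ (n - 2 * m) * (\<Sum>i\<le>(d - 1) div 2. (n choose i) * (q - 1) ^ i) \<le> q ^ n"
  show "d \<le> 3 + 1"
  proof (rule ccontr)
    assume "\<not> d \<le> 3 + 1"
    then have "2 \<in> {..(d - 1) div 2}" by auto
    then have "(n choose 2) * (q - 1) ^ 2 \<le> (\<Sum>i\<le>(d - 1) div 2. (n choose i) * (q - 1) ^ i)"
      by (rule member_le_sum[where f = "\<lambda>i. (n choose i) * (q - 1) ^ i"]) auto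
    then have "q ^ (n - 2 * m) * ((n choose 2) * (q - 1) ^ 2) \<le> q ^ n"
      using H by (meson le_trans mult_le_mono2)
    also have "q ^ n = q ^ (n - 2 * m) * (q ^ m) ^ 2" using nm
      by (simp add: power_add[symmetric] power_mult[symmetric] mult.commute)
    finally have A: "(n choose 2) * (q - 1) ^ 2 \<le> (q ^ m) ^ 2" using q7 by simp
    have "q ^ 2 \<le> q ^ m" using m2 q7 by (intro power_increasing) auto
    moreover have "49 \<le> q ^ 2" using mult_le_mono[OF q7 q7] by (simp add: power2_eq_square)
    ultimately have "49 \<le> q ^ m" by linarith
    then have n24: "n \<ge> 24" using n by simp
    have "36 \<le> (q - 1) ^ 2" using q7 power_mono[of 6 "q - 1" 2] by simp
    have ev: "even (n * (n - 1))" by (cases "even n") auto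
    have "18 * (n * (n - 1)) = (n choose 2) * 36" using ev by (auto simp: choose_two elim!: evenE)
    also have "\<dots> \<le> (n choose 2) * (q - 1) ^ 2" using \<open>36 \<le> (q - 1) ^ 2\<close> by simp
    also have "\<dots> \<le> (2 * n + 1) ^ 2" using A n by simp
    finally show False using sq_ineq[OF n24] by simp
  qed
qed



theorem theorem39:
  fixes \<phi> :: "'a::{finite,field_gcd} \<Rightarrow> 'b::{finite,field}"
    and q m n l :: nat and \<alpha> \<beta> :: 'b
  assumes "q = card (UNIV :: 'a set)"
    and "\<exists>p k. prime p \<and> k > 0 \<and> q = p ^ k"
    and "odd q" and "q \<ge> 7" and "m \<ge> 2"
    and "n = (q ^ m - 1) div 2"
    and "l = ord (2 * n) q"
    and "card (UNIV :: 'b set) = q ^ l"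
    and "field_embedding \<phi>"
    and "primitive_element \<alpha>"
    and "\<beta> = \<alpha> ^ ((q ^ l - 1) div (2 * n))"
  shows "lcm (min_poly \<phi> \<beta>) (min_poly \<phi> (\<beta> ^ 3)) = min_poly \<phi> \<beta> * min_poly \<phi> (\<beta> ^ 3)
    \<and> code_dim (negacyclic_code n (lcm (min_poly \<phi> \<beta>) (min_poly \<phi> (\<beta> ^ 3)))) = n - 2 * m
    \<and> min_distance (negacyclic_code n (lcm (min_poly \<phi> \<beta>) (min_poly \<phi> (\<beta> ^ 3)))) = 3
    \<and> almost_dist_opt_sphere_packing q n (n - 2 * m) 3"
proof -
  note cq = assms(1) and q7 = assms(4) and m2 = assms(5) and emb = assms(9) and prim = assms(10)
  have h: "rhom \<phi>" using emb field_embedding_hom by blast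
  have inj: "inj \<phi>" using emb unfolding field_embedding_def by auto
  obtain p k where pk: "prime p" "k > 0" "q = p ^ k" using assms(2) by blast
  define Q where "Q = q ^ m"
  define N where "N = Q - 1"
  have Q49: "Q \<ge> 49"
  proof -
    have "q ^ 2 \<le> q ^ m" using m2 q7 by (intro power_increasing) auto
    moreover have "49 \<le> q ^ 2" using mult_le_mono[OF q7 q7] by (simp add: power2_eq_square)
    ultimately show ?thesis unfolding Q_def by linarith
  qed
  have oddQ: "odd Q" unfolding Q_def using assms(3) by simp
  have N2n: "N = 2 * n" using oddQ Q49 unfolding N_def assms(6) Q_def[symmetric] by (auto elim!: oddE)
  have n0: "n > 0" using N2n Q49 N_def by simp
  have N48: "N \<ge> 48" using Q49 N_def by simp
  have QN1: "Q = N + 1" using Q49 N_def by simp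
  have Qm: "Q mod N = 1"
  proof -
    have "Q mod N = (1 + N) mod N" using QN1 by simp
    also have "\<dots> = 1 mod N" by (rule mod_add_self2)
    also have "\<dots> = 1" using N48 by simp
    finally show ?thesis .
  qed
  have bnd: "3 * q ^ d + 1 < Q" "q ^ d \<ge> 7" if "0 < d" "d < m" for d
    using qd_bounds[OF q7 that] Q_def by auto
  have ordm: "ord N q = m"
  proof -
    have copQ: "coprime N Q" unfolding N_def using coprime_diff_one_left_nat[of Q] Q49 by simp
    then have cop: "coprime N q" unfolding Q_def using m2 by simp
    have "[q ^ m = 1] (mod N)" unfolding cong_def Q_def[symmetric] using Qm N48 by simp
    then have dv: "ord N q dvd m" by (simp add: ord_divides')
    have pos: "ord N q > 0" using cop by simp
    have le: "ord N q \<le> m" using dv m2 by (simp add: dvd_imp_le)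
    show ?thesis
    proof (rule ccontr)
      assume "ord N q \<noteq> m"
      then have lt: "ord N q < m" using le by simp
      have "[q ^ ord N q = 1] (mod N)" using ord_works by blast
      moreover have "q ^ ord N q mod N = q ^ ord N q" using bnd[OF pos lt] N_def by simp
      moreover have "1 mod N = 1" using Q49 N_def by simp
      ultimately show False using bnd[OF pos lt] unfolding cong_def by simp
    qed
  qed
  have lm: "l = m" using assms(7) ordm N2n by simp
  have cardb: "card (UNIV :: 'b set) = Q" using assms(8) lm Q_def by simp
  have beta: "\<beta> = \<alpha>" using assms(11) lm N2n N_def Q_def n0 by simp
  have a0: "\<alpha> \<noteq> 0" and aN: "\<alpha> ^ N = 1" and pw: "\<And>i j. \<alpha> ^ i = \<alpha> ^ j \<longleftrightarrow> i mod N = j mod N"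
    using prim_facts[OF prim cardb] N_def by auto
  have qchar: "q = CHAR('a) ^ k" using ff_card_CHAR_pow[where 'a='a, of p k] cq pk by simp
  have cb: "CHAR('b) = CHAR('a)" by (rule embedding_CHAR[OF emb])
  have hF: "rhom (\<lambda>y::'b. y ^ q)"
    by (rule frob_hom[of k]) (use qchar cb ff_CHAR_prime[where 'a='a] q7 prime_gt_0_nat in auto)
  have rng: "\<forall>y::'b. y ^ q = y \<longleftrightarrow> y \<in> range \<phi>" using range_embedding_fixed[OF emb cq] by blast
  have q0: "q > 0" using q7 by simp
  have aQ: "\<alpha> ^ (q ^ m) = \<alpha>"
    using pw[of Q 1] Q_def Qm N48 by simp
  have o1: "\<forall>d. 0 < d \<and> d < m \<longrightarrow> \<alpha> ^ (q ^ d) \<noteq> \<alpha>"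
  proof (intro allI impI)
    fix d assume d: "0 < d \<and> d < m"
    show "\<alpha> ^ (q ^ d) \<noteq> \<alpha>"
    proof
      assume "\<alpha> ^ (q ^ d) = \<alpha>"
      then have "\<alpha> ^ (q ^ d) = \<alpha> ^ 1" by simp
      then have "q ^ d mod N = 1 mod N" using pw by blast
      moreover have "q ^ d mod N = q ^ d" using bnd[of d] d N_def by simp
      moreover have "1 mod N = 1" using Q49 N_def by simp
      ultimately show False using bnd[of d] d by simp
    qed
  qed
  have a3Q: "(\<alpha> ^ 3) ^ (q ^ m) = \<alpha> ^ 3"
    by (metis aQ power_mult mult.commute)
  have o3: "\<forall>d. 0 < d \<and> d < m \<longrightarrow> (\<alpha> ^ 3) ^ (q ^ d) \<noteq> \<alpha> ^ 3"
  proof (intro allI impI)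
    fix d assume d: "0 < d \<and> d < m"
    show "(\<alpha> ^ 3) ^ (q ^ d) \<noteq> \<alpha> ^ 3"
    proof
      assume "(\<alpha> ^ 3) ^ (q ^ d) = \<alpha> ^ 3"
      then have "\<alpha> ^ (3 * q ^ d) = \<alpha> ^ 3" by (simp add: power_mult)
      then have "(3 * q ^ d) mod N = 3 mod N" using pw by blast
      then have "N dvd 3 * q ^ d - 3" using mod_eq_dvd_iff_nat[of 3 "3 * q ^ d" N] bnd[of d] d by simp
      moreover have "3 * q ^ d - 3 > 0" using bnd[of d] d by simp
      ultimately have "N \<le> 3 * q ^ d - 3" by (simp add: dvd_imp_le)
      then show False using bnd[of d] d N_def by simp
    qed
  qed
  have m0: "m > 0" using m2 by simp
  have M1: "lead_coeff (min_poly \<phi> \<alpha>) = 1 \<and> degree (min_poly \<phi> \<alpha>) = m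
    \<and> poly (map_poly \<phi> (min_poly \<phi> \<alpha>)) \<alpha> = 0
    \<and> (\<forall>r. poly (map_poly \<phi> r) \<alpha> = 0 \<longrightarrow> min_poly \<phi> \<alpha> dvd r)
    \<and> map_poly \<phi> (min_poly \<phi> \<alpha>) = (\<Prod>i<m. [:-(\<alpha> ^ (q ^ i)), 1:])"
    by (rule orbit_min_poly[OF emb hF q0 rng m0 aQ o1])
  have M3: "lead_coeff (min_poly \<phi> (\<alpha>^3)) = 1 \<and> degree (min_poly \<phi> (\<alpha>^3)) = m
    \<and> poly (map_poly \<phi> (min_poly \<phi> (\<alpha>^3))) (\<alpha>^3) = 0
    \<and> (\<forall>r. poly (map_poly \<phi> r) (\<alpha>^3) = 0 \<longrightarrow> min_poly \<phi> (\<alpha>^3) dvd r)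
    \<and> map_poly \<phi> (min_poly \<phi> (\<alpha>^3)) = (\<Prod>i<m. [:-((\<alpha>^3) ^ (q ^ i)), 1:])"
    by (rule orbit_min_poly[OF emb hF q0 rng m0 a3Q o3])
  define M1p where "M1p = min_poly \<phi> \<alpha>"
  define M3p where "M3p = min_poly \<phi> (\<alpha> ^ 3)"
  have root1: "poly (map_poly \<phi> M1p) \<alpha> = 0" unfolding M1p_def using M1 by blast
  have root3: "poly (map_poly \<phi> M3p) (\<alpha> ^ 3) = 0" unfolding M3p_def using M3 by blast
  have P3a: "poly (map_poly \<phi> M3p) \<alpha> \<noteq> 0"
  proof -
    have ne: "\<alpha> \<noteq> (\<alpha> ^ 3) ^ (q ^ i)" if i: "i < m" for i
    proof
      assume eq: "\<alpha> = (\<alpha> ^ 3) ^ (q ^ i)"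
      have "\<alpha> ^ (q ^ (m - i)) = ((\<alpha> ^ 3) ^ (q ^ i)) ^ (q ^ (m - i))" using eq by simp
      also have "\<dots> = (\<alpha> ^ 3) ^ (q ^ m)" using i by (simp add: orbit_power)
      also have "\<dots> = \<alpha> ^ 3" by (rule a3Q)
      finally have e: "\<alpha> ^ (q ^ (m - i)) = \<alpha> ^ 3" .
      have "1 mod N = 1" "3 mod N = 3" using Q49 N_def by auto
      show False
      proof (cases "i = 0")
        case True
        then have "\<alpha> ^ 1 = \<alpha> ^ 3" using e aQ by simp
        then show False using pw[of 1 3] \<open>1 mod N = 1\<close> \<open>3 mod N = 3\<close> by simp
      next
        case False
        then have "0 < m - i" "m - i < m" using i by auto
        then have "q ^ (m - i) mod N = q ^ (m - i)" "q ^ (m - i) \<ge> 7" using bnd[of "m - i"] N_def by auto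
        then show False using pw[of "q ^ (m - i)" 3] e \<open>3 mod N = 3\<close> by simp
      qed
    qed
    have "poly (map_poly \<phi> M3p) \<alpha> = (\<Prod>i<m. \<alpha> - (\<alpha> ^ 3) ^ (q ^ i))"
      using M3 unfolding M3p_def by (simp add: poly_prod)
    also have "\<dots> \<noteq> 0" using ne by (simp add: prod_zero_iff)
    finally show ?thesis .
  qed
  have cop: "coprime M1p M3p"
    by (rule coprime_min[OF h _ _ _ P3a]) (use M1 M1p_def in auto)
  define g where "g = M1p * M3p"
  have lcmg: "lcm M1p M3p = g"
  proof -
    have "lcm M1p M3p = normalize g" using lcm_coprime[OF cop] g_def by simp
    moreover have "lead_coeff g = 1"
    proof -
      have "lead_coeff g = lead_coeff M1p * lead_coeff M3p" unfolding g_def by (rule lead_coeff_mult)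
      moreover have "lead_coeff M1p = 1" unfolding M1p_def by (rule conjunct1[OF M1])
      moreover have "lead_coeff M3p = 1" unfolding M3p_def by (rule conjunct1[OF M3])
      ultimately show ?thesis by (simp only: mult_1)
    qed
    ultimately show ?thesis by (simp add: normalize_poly_eq_map_poly map_poly_idI)
  qed
  have g0: "g \<noteq> 0" using M1 M3 unfolding g_def M1p_def M3p_def by auto
  have degg: "degree g = 2 * m" using M1 M3 unfolding g_def M1p_def M3p_def
    by (subst degree_mult_eq) auto
  define X where "X = Polynomial.monom (1::'a) n + 1"
  have mapX: "map_poly \<phi> X = Polynomial.monom 1 n + 1"
    unfolding X_def by (simp add: map_poly_hom_add[OF h] map_poly_hom_monom[OF h] homD[OF h])
  have an: "\<alpha> ^ n = -1"
  proof -
    have "(\<alpha> ^ n) ^ 2 = 1" using aN N2n by (simp add: power_mult[symmetric] mult.commute)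
    moreover have "\<alpha> ^ n \<noteq> 1"
    proof
      assume "\<alpha> ^ n = 1"
      then have "\<alpha> ^ n = \<alpha> ^ 0" by simp
      then have "n mod N = 0 mod N" using pw by blast
      then show False using N2n n0 by simp
    qed
    ultimately show ?thesis by (simp add: power2_eq_1_iff)
  qed
  have M1X: "M1p dvd X"
  proof -
    have "poly (map_poly \<phi> X) \<alpha> = 0" using an by (simp add: mapX poly_monom)
    then show ?thesis using M1 M1p_def by auto
  qed
  have M3X: "M3p dvd X"
  proof -
    have "(\<alpha> ^ 3) ^ n = (\<alpha> ^ n) ^ 3" by (simp add: power_mult[symmetric] mult.commute)
    then have "poly (map_poly \<phi> X) (\<alpha> ^ 3) = 0" using an by (simp add: mapX poly_monom)
    then show ?thesis using M3 M3p_def by auto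
  qed
  have gX: "g dvd X" unfolding g_def by (rule divides_mult[OF M1X M3X cop])
  then obtain w where w: "X = g * w" by (auto elim: dvdE)
  have degX: "degree X = n" unfolding X_def using n0 by (subst degree_add_eq_left) (auto simp: degree_monom_eq)
  have X0: "X \<noteq> 0" using degX n0 by auto
  have w0: "w \<noteq> 0" using w X0 by auto
  have degw: "degree w = n - 2 * m" and nm: "2 * m \<le> n"
    using degX w g0 w0 degg by (auto simp: degree_mult_eq)
  have code: "negacyclic_code n (lcm (min_poly \<phi> \<beta>) (min_poly \<phi> (\<beta> ^ 3))) = {(f * g) mod X | f. True}"
    unfolding negacyclic_code_def X_def[symmetric] beta using lcmg M1p_def M3p_def by simp
  have cc: "c \<in> {(f * g) mod X | f. True} \<longleftrightarrow> (\<exists>h. c = h * g \<and> (h = 0 \<or> degree h < n - 2 * m))" for c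
    using code_char[OF g0 w0 w] degw by simp
  have dim: "code_dim {(f * g) mod X | f. True} = n - 2 * m" using code_dim_k[OF g0 w0 w] degw by simp
  have sep: "\<forall>i j. i < n \<longrightarrow> j < n \<longrightarrow> \<alpha> ^ (2 * i) = \<alpha> ^ (2 * j) \<longrightarrow> i = j"
  proof (intro allI impI)
    fix i j assume ij: "i < n" "j < n" "\<alpha> ^ (2 * i) = \<alpha> ^ (2 * j)"
    then have "(2 * i) mod N = (2 * j) mod N" using pw by blast
    then show "i = j" using ij N2n by simp
  qed
  have wt: "hamming_weight c \<ge> 3" if c: "c \<in> {(f * g) mod X | f. True}" "c \<noteq> 0" for c
  proof -
    obtain hh where hh: "c = hh * g" "hh = 0 \<or> degree hh < n - 2 * m" using c cc by blast
    have hh0: "hh \<noteq> 0" using hh c by auto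
    have dc: "degree c < n" using hh hh0 g0 degg nm by (simp add: degree_mult_eq)
    have r1: "poly (map_poly \<phi> c) \<alpha> = 0" unfolding hh(1) g_def
      by (simp add: map_poly_hom_mult[OF h] root1)
    have r3: "poly (map_poly \<phi> c) (\<alpha> ^ 3) = 0" unfolding hh(1) g_def
      by (simp add: map_poly_hom_mult[OF h] root3)
    show ?thesis by (rule weight_ge3[OF h inj c(2) dc r1 r3 a0 sep])
  qed
  have pos: "\<exists>i t. i < n \<and> \<phi> t = \<alpha> ^ i \<and> t ^ 2 = s ^ 2" if s0: "s \<noteq> 0" for s
  proof -
    have "\<phi> s \<noteq> 0" using s0 inj homD(1)[OF h] by (metis injD)
    then have "\<phi> s \<in> {\<alpha> ^ k | k. True}" using prim unfolding primitive_element_def by blast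
    then obtain kk where kk: "\<phi> s = \<alpha> ^ kk" by blast
    define j where "j = kk mod N"
    have aj: "\<alpha> ^ j = \<phi> s" using kk pw[of j kk] j_def by simp
    have jN: "j < N" unfolding j_def using n0 N2n by simp
    show ?thesis
    proof (cases "j < n")
      case True then show ?thesis using aj by (intro exI[of _ j] exI[of _ s]) simp
    next
      case False
      define i where "i = j - n"
      have i: "i < n" using jN N2n False i_def by simp
      have "\<alpha> ^ j = \<alpha> ^ i * \<alpha> ^ n" using False i_def by (simp add: power_add[symmetric])
      then have "\<alpha> ^ i = \<phi> (- s)" using aj an hom_uminus[OF h] by (simp add: minus_equation_iff)
      then show ?thesis using i by (intro exI[of _ i] exI[of _ "-s"]) simp
    qed
  qed
  have card7: "card (UNIV :: 'a set) \<ge> 7" using cq q7 by simp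
  obtain s1 :: 'a where s1: "s1 \<noteq> 0" using nonsquare_exists[of "{}", OF _ card7] by auto
  obtain s2 :: 'a where s2: "s2 \<noteq> 0" "s2 ^ 2 \<noteq> s1 ^ 2"
    using nonsquare_exists[of "{s1 ^ 2}", OF _ card7] by auto
  obtain s3 :: 'a where s3: "s3 \<noteq> 0" "s3 ^ 2 \<noteq> s1 ^ 2" "s3 ^ 2 \<noteq> s2 ^ 2"
  proof -
    have "card {s1 ^ 2, s2 ^ 2} \<le> 2" by (simp add: card_insert_le_m1)
    then show ?thesis using nonsquare_exists[of "{s1 ^ 2, s2 ^ 2}", OF _ card7] that by auto
  qed
  obtain i1 t1 where it1: "i1 < n" "\<phi> t1 = \<alpha> ^ i1" "t1 ^ 2 = s1 ^ 2" using pos[OF s1] by blast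
  obtain i2 t2 where it2: "i2 < n" "\<phi> t2 = \<alpha> ^ i2" "t2 ^ 2 = s2 ^ 2" using pos[OF s2(1)] by blast
  obtain i3 t3 where it3: "i3 < n" "\<phi> t3 = \<alpha> ^ i3" "t3 ^ 2 = s3 ^ 2" using pos[OF s3(1)] by blast
  define T1 where "T1 = t1 ^ 2"
  define T2 where "T2 = t2 ^ 2"
  define T3 where "T3 = t3 ^ 2"
  have Tne: "T1 \<noteq> T2" "T1 \<noteq> T3" "T2 \<noteq> T3" using s2 s3 it1 it2 it3 T1_def T2_def T3_def by auto
  have t0: "t1 \<noteq> 0" "t2 \<noteq> 0" "t3 \<noteq> 0" using s1 s2 s3 it1 it2 it3 by auto
  have ine: "i1 \<noteq> i2" "i1 \<noteq> i3" "i2 \<noteq> i3"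
    using Tne it1 it2 it3 inj T1_def T2_def T3_def by (metis injD)+
  define c1 where "c1 = (T2 - T3) / t1"
  define c2 where "c2 = (T3 - T1) / t2"
  define c3 where "c3 = (T1 - T2) / t3"
  have c0: "c1 \<noteq> 0" "c2 \<noteq> 0" "c3 \<noteq> 0" using Tne t0 c1_def c2_def c3_def by auto
  define w3 where "w3 = Polynomial.monom c1 i1 + Polynomial.monom c2 i2 + Polynomial.monom c3 i3"
  have cw: "Polynomial.coeff w3 i = (if i = i1 then c1 else 0) + (if i = i2 then c2 else 0) + (if i = i3 then c3 else 0)" for i
    unfolding w3_def by simp
  have supp: "{i. Polynomial.coeff w3 i \<noteq> 0} = {i1, i2, i3}"
    using ine c0 by (auto simp: cw split: if_splits)
  have wt3: "hamming_weight w3 = 3" unfolding hamming_weight_def supp using ine by simp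
  have w30: "w3 \<noteq> 0" using supp by (metis (mono_tags) empty_iff insertI1 coeff_0 mem_Collect_eq)
  have dw3: "degree w3 < n"
  proof -
    have "degree w3 \<le> n - 1" by (rule degree_le) (use it1 it2 it3 in \<open>auto simp: cw\<close>)
    then show ?thesis using n0 by simp
  qed
  have mapw: "map_poly \<phi> w3 = Polynomial.monom (\<phi> c1) i1 + Polynomial.monom (\<phi> c2) i2 + Polynomial.monom (\<phi> c3) i3"
    unfolding w3_def by (simp add: map_poly_hom_add[OF h] map_poly_hom_monom[OF h])
  have ev1: "poly (map_poly \<phi> w3) \<alpha> = 0"
  proof -
    have "poly (map_poly \<phi> w3) \<alpha> = \<phi> c1 * \<phi> t1 + \<phi> c2 * \<phi> t2 + \<phi> c3 * \<phi> t3"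
      using it1 it2 it3 by (simp add: mapw poly_monom)
    also have "\<dots> = \<phi> (c1 * t1 + c2 * t2 + c3 * t3)" by (simp add: homD[OF h])
    also have "c1 * t1 + c2 * t2 + c3 * t3 = 0" using t0 unfolding c1_def c2_def c3_def by simp
    finally show ?thesis using homD(1)[OF h] by simp
  qed
  have ev3: "poly (map_poly \<phi> w3) (\<alpha> ^ 3) = 0"
  proof -
    have p3: "(\<alpha> ^ 3) ^ i = (\<alpha> ^ i) ^ 3" for i by (simp add: power_mult[symmetric] mult.commute)
    have "poly (map_poly \<phi> w3) (\<alpha> ^ 3) = \<phi> c1 * \<phi> t1 ^ 3 + \<phi> c2 * \<phi> t2 ^ 3 + \<phi> c3 * \<phi> t3 ^ 3"
      using it1 it2 it3 by (simp add: mapw poly_monom p3)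
    also have "\<dots> = \<phi> (c1 * t1 ^ 3 + c2 * t2 ^ 3 + c3 * t3 ^ 3)" by (simp add: homD[OF h] hom_power[OF h])
    also have "c1 * t1 ^ 3 + c2 * t2 ^ 3 + c3 * t3 ^ 3 = 0"
    proof -
      have "c1 * t1 ^ 3 = (T2 - T3) * T1" using t0 unfolding c1_def T1_def by (simp add: power2_eq_square power3_eq_cube)
      moreover have "c2 * t2 ^ 3 = (T3 - T1) * T2" using t0 unfolding c2_def T2_def by (simp add: power2_eq_square power3_eq_cube)
      moreover have "c3 * t3 ^ 3 = (T1 - T2) * T3" using t0 unfolding c3_def T3_def by (simp add: power2_eq_square power3_eq_cube)
      ultimately have "c1 * t1 ^ 3 + c2 * t2 ^ 3 + c3 * t3 ^ 3 = (T2 - T3) * T1 + (T3 - T1) * T2 + (T1 - T2) * T3"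
        by (simp only:)
      also have "\<dots> = 0" by (simp add: algebra_simps)
      finally show ?thesis .
    qed
    finally show ?thesis using homD(1)[OF h] by simp
  qed
  have w3C: "w3 \<in> {(f * g) mod X | f. True}"
  proof -
    have "M1p dvd w3" using M1 ev1 M1p_def by auto
    moreover have "M3p dvd w3" using M3 ev3 M3p_def by auto
    ultimately have "g dvd w3" unfolding g_def using cop by (rule divides_mult)
    then obtain hh where hh: "w3 = g * hh" by (auto elim: dvdE)
    have hh0: "hh \<noteq> 0" using hh w30 by auto
    have "degree hh < n - 2 * m" using hh hh0 g0 degg dw3 nm by (simp add: degree_mult_eq)
    then show ?thesis unfolding cc using hh by (intro exI[of _ hh]) (simp add: mult.commute)
  qed
  have mind: "min_distance {(f * g) mod X | f. True} = 3"
    unfolding min_distance_def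
  proof (rule cInf_eq_minimum)
    show "3 \<in> {hamming_weight c |c. c \<in> {(f * g) mod X |f. True} \<and> c \<noteq> 0}"
      using w3C w30 wt3 by (metis (mono_tags, lifting) mem_Collect_eq)
    fix x assume "x \<in> {hamming_weight c |c. c \<in> {(f * g) mod X |f. True} \<and> c \<noteq> 0}"
    then show "3 \<le> x" using wt by blast
  qed
  have sp: "almost_dist_opt_sphere_packing q n (n - 2 * m) 3"
    by (rule sphere[OF q7 m2 _ nm]) (use N2n N_def Q_def Q49 in simp)
  show ?thesis
    using lcmg dim mind sp code M1p_def M3p_def beta g_def by simp
qed


end
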